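(* Let $\mathbf{x}_1,\dots,\mathbf{x}_n\in\mathbb{R}^d$ with $\|\mathbf{x}_i\|\le1$, $f(\mathbf{x};\mathbf{w})=\frac1{\sqrt m}\sum_{s=1}^m a_s\phi(\mathbf{x}^\top\mathbf{w}^{(s)})$ with $\phi(z)=\max\{z,0\}$, $\phi'(0):=0$, $a_s\in\{\pm1\}$, $f_i(\mathbf{w})=f(\mathbf{x}_i;\mathbf{w})$, and $\mathbf{w}_0\sim\mathcal{N}(0,I_{md})$. Fix $R>0$, $\delta\in(0,1)$, let $\mathcal{B}=\{\mathbf{w}:\|\mathbf{w}-\mathbf{w}_0\|\le R\}$ and $\xi_i(\mathbf{w},\mathbf{v}):=f_i(\mathbf{w})-f_i(\mathbf{v})-\langle\nabla f_i(\mathbf{v}),\mathbf{w}-\mathbf{v}\rangle$. Then with probability at least $1-\delta$, for all $\mathbf{w},\mathbf{v}\in\mathcal{B}$, \[\max_i|\xi_i(\mathbf{w},\mathbf{v})|\le\frac{3R^{1/3}+\ln^{1/4}(n/\delta)}{m^{1/6}}\|\mathbf{w}-\mathbf{v}\|,\qquad\max_i\|\nabla f_i(\mathbf{w})-\nabla f_i(\mathbf{v})\|\le\frac{3R^{1/3}+\ln^{1/4}(n/\delta)}{m^{1/6}}.\]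
   Context: $\nabla f_i(\mathbf{w})$ denotes the vector whose $s$-th block is $\frac{a_s}{\sqrt m}\phi'(\mathbf{x}_i^\top\mathbf{w}^{(s)})\mathbf{x}_i$. *)

theory Defs
  imports "HOL-Analysis.Analysis" "HOL-Probability.Probability"
begin

text \<open>Weights w in R^(m d) are represented as w :: real^'d^'m; the s-th block is w $ s.
  The norm on real^'d^'m is the Euclidean norm of R^(m d).\<close>

definition relu :: "real \<Rightarrow> real" where
  "relu z = max z 0"

definition relu' :: "real \<Rightarrow> real" where
  "relu' z = (if z > 0 then 1 else 0)"

definition net :: "('m::finite \<Rightarrow> real) \<Rightarrow> real^'d \<Rightarrow> real^'d^'m \<Rightarrow> real" where
  "net a x w = (1 / sqrt (real CARD('m))) * (\<Sum>s\<in>UNIV. a s * relu (x \<bullet> (w $ s)))"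

definition net_grad :: "('m::finite \<Rightarrow> real) \<Rightarrow> real^'d \<Rightarrow> real^'d^'m \<Rightarrow> real^'d^'m" where
  "net_grad a x w = (\<chi> s. ((a s / sqrt (real CARD('m))) * relu' (x \<bullet> (w $ s))) *\<^sub>R x)"

definition lin_err :: "('m::finite \<Rightarrow> real) \<Rightarrow> real^'d \<Rightarrow> real^'d^'m \<Rightarrow> real^'d^'m \<Rightarrow> real" where
  "lin_err a x w v = net a x w - net a x v - net_grad a x v \<bullet> (w - v)"

definition gauss_init :: "(real^'d^'m) measure" where
  "gauss_init = density lborel
     (\<lambda>w. ennreal (\<Prod>s\<in>UNIV. \<Prod>j\<in>UNIV. std_normal_density (w $ s $ j)))"

end

theory Submission
  imports Defs
begin

lemma measurable_vec_lambda_PiM[measurable]: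
  "(vec_lambda :: ('n::finite \<Rightarrow> 'a::euclidean_space) \<Rightarrow> 'a^'n) \<in> PiM UNIV (\<lambda>_. borel) \<rightarrow>\<^sub>M borel"
proof (subst borel_measurable_euclidean_space, intro ballI)
  fix b :: "'a^'n" assume "b \<in> Basis"
  then obtain i u where b: "b = axis i u" "u \<in> Basis" by (auto simp: Basis_vec_def)
  have "(\<lambda>f::'n\<Rightarrow>'a. vec_lambda f \<bullet> b) = (\<lambda>f. f i \<bullet> u)"
    by (auto simp: b inner_axis)
  then show "(\<lambda>f::'n\<Rightarrow>'a. vec_lambda f \<bullet> b) \<in> borel_measurable (PiM UNIV (\<lambda>_. borel))"
    by simp
qed

lemma prod_Basis_vec:
  fixes g :: "'a::euclidean_space^'n::finite \<Rightarrow> ennreal"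
  shows "(\<Prod>b\<in>(Basis::('a^'n) set). g b) = (\<Prod>i\<in>UNIV. \<Prod>u\<in>Basis. g (axis i u))"
proof -
  have eq: "(Basis::('a^'n) set) = (\<Union>i\<in>UNIV. (\<lambda>u. axis i u) ` Basis)"
    by (auto simp: Basis_vec_def)
  have "(\<Prod>b\<in>(Basis::('a^'n) set). g b) = (\<Prod>b\<in>(\<Union>i\<in>UNIV. (\<lambda>u. axis i u) ` Basis). g b)"
    using arg_cong[where f="prod g", OF eq] .
  also have "\<dots> = (\<Prod>i\<in>UNIV. \<Prod>b\<in>(\<lambda>u. axis i u) ` Basis. g b)"
    apply (rule prod.UNION_disjoint)
      apply simp_all
    apply (auto simp: axis_eq_axis)
    done
  also have "\<dots> = (\<Prod>i\<in>UNIV. \<Prod>u\<in>Basis. g (axis i u))"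
    apply (rule prod.cong, simp)
    apply (subst prod.reindex)
     apply (auto simp: inj_on_def axis_eq_axis)
    done
  finally show ?thesis .
qed

lemma mem_box_vec:
  fixes x l u :: "'a::euclidean_space^'n::finite"
  shows "x \<in> box l u \<longleftrightarrow> (\<forall>i. x$i \<in> box (l$i) (u$i))"
proof
  assume "x \<in> box l u"
  then have h: "l \<bullet> b < x \<bullet> b \<and> x \<bullet> b < u \<bullet> b" if "b \<in> Basis" for b
    using that unfolding mem_box by blast
  show "\<forall>i. x$i \<in> box (l$i) (u$i)"
  proof (intro allI)
    fix i
    show "x$i \<in> box (l$i) (u$i)"
      unfolding mem_box
    proof (intro ballI)
      fix v :: 'a assume "v \<in> Basis"
      then have "axis i v \<in> Basis" by simp
      from h[OF this] show "l$i \<bullet> v < x$i \<bullet> v \<and> x$i \<bullet> v < u$i \<bullet> v"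
        by (simp add: inner_axis)
    qed
  qed
next
  assume *: "\<forall>i. x$i \<in> box (l$i) (u$i)"
  show "x \<in> box l u"
    unfolding mem_box
  proof
    fix b :: "'a^'n" assume "b \<in> Basis"
    then obtain i v where b: "b = axis i v" "v \<in> Basis" by (auto simp: Basis_vec_def)
    show "l \<bullet> b < x \<bullet> b \<and> x \<bullet> b < u \<bullet> b"
      using *[rule_format, of i] b by (simp add: inner_axis mem_box)
  qed
qed

lemma lborel_vec:
  "(lborel :: ('a::euclidean_space^'n::finite) measure) = distr (PiM UNIV (\<lambda>_. lborel)) borel vec_lambda"
proof (rule lborel_eqI)
  fix l u :: "'a^'n" assume le: "\<And>b. b \<in> Basis \<Longrightarrow> l \<bullet> b \<le> u \<bullet> b"
  have le': "l$i \<bullet> b \<le> u$i \<bullet> b" if "b \<in> Basis" for i b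
  proof -
    have "axis i b \<in> Basis" using that by simp
    from le[OF this] show ?thesis by (simp add: inner_axis)
  qed
  interpret product_sigma_finite "\<lambda>_::'n. (lborel::'a measure)" by standard
  have meas: "vec_lambda \<in> PiM UNIV (\<lambda>_. lborel) \<rightarrow>\<^sub>M (borel :: ('a^'n) measure)"
  proof -
    have "sets (PiM UNIV (\<lambda>_::'n. (lborel::'a measure))) = sets (PiM UNIV (\<lambda>_. borel))"
      by (rule sets_PiM_cong) simp_all
    from measurable_cong_sets[OF this refl] measurable_vec_lambda_PiM show ?thesis by simp
  qed
  have pre: "vec_lambda -` box l u \<inter> space (PiM UNIV (\<lambda>_. lborel)) = PiE UNIV (\<lambda>i. box (l$i) (u$i))"
    by (auto simp: mem_box_vec space_PiM PiE_iff)
  have "emeasure (distr (PiM UNIV (\<lambda>_. lborel)) borel vec_lambda) (box l u)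
     = emeasure (PiM UNIV (\<lambda>_. lborel)) (PiE UNIV (\<lambda>i. box (l$i) (u$i)))"
    by (subst emeasure_distr[OF meas]) (simp_all add: pre)
  also have "\<dots> = (\<Prod>i\<in>UNIV. emeasure lborel (box (l$i) (u$i)))"
    by (rule emeasure_PiM) auto
  also have "\<dots> = (\<Prod>i\<in>UNIV. \<Prod>b\<in>Basis. ennreal ((u$i - l$i) \<bullet> b))"
    using le' by (simp add: emeasure_lborel_box inner_diff_left prod_ennreal)
  also have "\<dots> = (\<Prod>b\<in>Basis. ennreal ((u - l) \<bullet> b))"
    by (subst prod_Basis_vec) (simp add: inner_axis)
  also have "\<dots> = ennreal (\<Prod>b\<in>Basis. (u - l) \<bullet> b)"
    using le by (subst prod_ennreal) (auto simp: inner_diff_left)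
  finally show "emeasure (distr (PiM UNIV (\<lambda>_. lborel)) borel vec_lambda) (box l u) = (\<Prod>b\<in>Basis. (u - l) \<bullet> b)" .
qed simp


lemma density_PiM_prod:
  fixes g :: "'a::euclidean_space \<Rightarrow> real" and I :: "'i set"
  assumes g[measurable]: "g \<in> borel_measurable borel" and nn: "\<And>x. 0 \<le> g x"
    and ps: "prob_space (density lborel (\<lambda>x. ennreal (g x)))" and fin: "finite I"
  shows "density (PiM I (\<lambda>_. lborel)) (\<lambda>f. ennreal (\<Prod>i\<in>I. g (f i)))
       = PiM I (\<lambda>_. density lborel (\<lambda>x. ennreal (g x)))"
proof -
  interpret L: product_sigma_finite "\<lambda>_::'i. (lborel::'a measure)" by standard
  interpret G: product_prob_space "\<lambda>_::'i. density lborel (\<lambda>x. ennreal (g x))"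
    by (rule product_prob_spaceI) (use ps in auto)
  show ?thesis
  proof (rule G.PiM_eqI[OF fin])
    show "sets (density (PiM I (\<lambda>_. lborel)) (\<lambda>f. ennreal (\<Prod>i\<in>I. g (f i))))
        = sets (PiM I (\<lambda>_. density lborel (\<lambda>x. ennreal (g x))))"
      by (simp only: sets_density) (rule sets_PiM_cong; simp)
  next
    fix A assume A: "\<And>i. i \<in> I \<Longrightarrow> A i \<in> sets (density lborel (\<lambda>x. ennreal (g x)))"
    then have A': "\<And>i. i \<in> I \<Longrightarrow> A i \<in> sets borel" by simp
    have PA: "PiE I A \<in> sets (PiM I (\<lambda>_. (lborel::'a measure)))"
      using A' by (intro sets_PiM_I_finite fin) auto
    have "emeasure (density (PiM I (\<lambda>_. lborel)) (\<lambda>f. ennreal (\<Prod>i\<in>I. g (f i)))) (PiE I A)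
        = (\<integral>\<^sup>+f. ennreal (\<Prod>i\<in>I. g (f i)) * indicator (PiE I A) f \<partial>PiM I (\<lambda>_. lborel))"
      using PA by (subst emeasure_density) auto
    also have "\<dots> = (\<integral>\<^sup>+f. (\<Prod>i\<in>I. ennreal (g (f i)) * indicator (A i) (f i)) \<partial>PiM I (\<lambda>_. lborel))"
    proof (rule nn_integral_cong)
      fix f assume "f \<in> space (PiM I (\<lambda>_. (lborel::'a measure)))"
      then have f: "f \<in> extensional I" by (auto simp: space_PiM PiE_def)
      have "indicator (PiE I A) f = (\<Prod>i\<in>I. indicator (A i) (f i) :: ennreal)"
      proof (cases "f \<in> PiE I A")
        case True
        then show ?thesis by (simp add: PiE_iff)
      next
        case False
        with f obtain i where "i \<in> I" "f i \<notin> A i" by (auto simp: PiE_iff)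
        then have "(\<Prod>i\<in>I. indicator (A i) (f i) :: ennreal) = 0"
          using fin by (intro prod_zero) (auto intro!: bexI[of _ i])
        with False show ?thesis by simp
      qed
      then show "ennreal (\<Prod>i\<in>I. g (f i)) * indicator (PiE I A) f
          = (\<Prod>i\<in>I. ennreal (g (f i)) * indicator (A i) (f i))"
        using nn by (simp add: prod.distrib prod_ennreal)
    qed
    also have "\<dots> = (\<Prod>i\<in>I. \<integral>\<^sup>+x. ennreal (g x) * indicator (A i) x \<partial>lborel)"
      using A' by (intro L.product_nn_integral_prod fin) auto
    also have "\<dots> = (\<Prod>i\<in>I. emeasure (density lborel (\<lambda>x. ennreal (g x))) (A i))"
      using A' by (intro prod.cong refl) (simp add: emeasure_density)
    finally show "emeasure (density (PiM I (\<lambda>_. lborel)) (\<lambda>f. ennreal (\<Prod>i\<in>I. g (f i)))) (PiE I A)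
        = (\<Prod>i\<in>I. emeasure (density lborel (\<lambda>x. ennreal (g x))) (A i))" .
  qed
qed


lemma borel_measurable_vec_nth[measurable]:
  "(\<lambda>v::'a::topological_space^'n::finite. v $ i) \<in> borel_measurable borel"
  by (intro borel_measurable_continuous_onI continuous_on_component continuous_on_id)

lemma borel_measurable_vec_nth'[measurable (raw)]:
  "f \<in> borel_measurable M \<Longrightarrow> (\<lambda>x. (f x :: 'a::topological_space^'n::finite) $ i) \<in> borel_measurable M"
  using measurable_compose[OF _ borel_measurable_vec_nth] by blast

lemma measurable_vec_lambda_PiM':
  assumes "sets Q = sets (borel::'a::euclidean_space measure)"
  shows "(vec_lambda :: ('n::finite \<Rightarrow> 'a) \<Rightarrow> 'a^'n) \<in> PiM UNIV (\<lambda>_. Q) \<rightarrow>\<^sub>M borel"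
proof -
  have "sets (PiM UNIV (\<lambda>_::'n. Q)) = sets (PiM UNIV (\<lambda>_. borel))"
    by (rule sets_PiM_cong) (simp_all add: assms)
  then have "PiM UNIV (\<lambda>_::'n. Q) \<rightarrow>\<^sub>M (borel::('a^'n) measure) = PiM UNIV (\<lambda>_. borel) \<rightarrow>\<^sub>M borel"
    by (rule measurable_cong_sets) simp
  with measurable_vec_lambda_PiM show ?thesis by simp
qed

lemma meas_from_borel:
  assumes "sets M = sets borel" "f \<in> borel_measurable borel"
  shows "f \<in> borel_measurable M"
proof -
  have "borel_measurable M = borel_measurable borel"
    by (rule measurable_cong_sets) (simp_all add: assms)
  with assms show ?thesis by simp
qed

lemma density_vec_prod:
  fixes g :: "'a::euclidean_space \<Rightarrow> real"
  assumes g[measurable]: "g \<in> borel_measurable borel" and nn: "\<And>x. 0 \<le> g x"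
    and ps: "prob_space (density lborel (\<lambda>x. ennreal (g x)))"
  shows "density lborel (\<lambda>v::'a^'n::finite. ennreal (\<Prod>i\<in>UNIV. g (v$i)))
       = distr (PiM UNIV (\<lambda>_. density lborel (\<lambda>x. ennreal (g x)))) borel vec_lambda"
proof -
  have meas: "(vec_lambda :: ('n \<Rightarrow> 'a) \<Rightarrow> 'a^'n) \<in> PiM UNIV (\<lambda>_. lborel) \<rightarrow>\<^sub>M borel"
    by (rule measurable_vec_lambda_PiM') simp
  have "density lborel (\<lambda>v::'a^'n. ennreal (\<Prod>i\<in>UNIV. g (v$i)))
      = density (distr (PiM UNIV (\<lambda>_. lborel)) borel vec_lambda) (\<lambda>v::'a^'n. ennreal (\<Prod>i\<in>UNIV. g (v$i)))"
    by (subst lborel_vec) (rule refl)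
  also have "\<dots> = distr (density (PiM UNIV (\<lambda>_. lborel)) (\<lambda>F. ennreal (\<Prod>i\<in>UNIV. g ((vec_lambda F :: 'a^'n)$i)))) borel vec_lambda"
    by (rule density_distr[OF _ meas]) measurable
  also have "(\<lambda>F. ennreal (\<Prod>i\<in>UNIV. g ((vec_lambda F :: 'a^'n)$i))) = (\<lambda>F. ennreal (\<Prod>i\<in>UNIV. g (F i)))"
    by simp
  also have "density (PiM UNIV (\<lambda>_. lborel)) (\<lambda>F::'n\<Rightarrow>'a. ennreal (\<Prod>i\<in>UNIV. g (F i)))
      = PiM UNIV (\<lambda>_. density lborel (\<lambda>x. ennreal (g x)))"
    by (rule density_PiM_prod[OF g nn ps]) simp
  finally show ?thesis .
qed

lemma vec_distr_facts:
  fixes Q :: "'a::euclidean_space measure"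
  assumes ps: "prob_space Q" and sQ: "sets Q = sets borel"
  defines "V \<equiv> distr (PiM UNIV (\<lambda>_::'n::finite. Q)) borel (vec_lambda :: ('n \<Rightarrow> 'a) \<Rightarrow> 'a^'n)"
  shows "prob_space V"
    and "\<And>i. distr V borel (\<lambda>v. v$i) = Q"
    and "prob_space.indep_vars V (\<lambda>_. borel) (\<lambda>i v. v$i) UNIV"
proof -
  interpret P: product_prob_space "\<lambda>_::'n. Q" UNIV
    by (rule product_prob_spaceI) (use ps in auto)
  have meas: "(vec_lambda :: ('n \<Rightarrow> 'a) \<Rightarrow> 'a^'n) \<in> PiM UNIV (\<lambda>_. Q) \<rightarrow>\<^sub>M borel"
    by (rule measurable_vec_lambda_PiM'[OF sQ])
  show psV: "prob_space V"
    unfolding V_def by (rule prob_space.prob_space_distr[OF P.prob_space_axioms meas])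
  interpret V: prob_space V by (rule psV)
  have comp: "distr V borel (\<lambda>v. v$i) = Q" for i
  proof -
    have "distr V borel (\<lambda>v. v$i) = distr (PiM UNIV (\<lambda>_::'n. Q)) borel (\<lambda>F. (vec_lambda F :: 'a^'n) $ i)"
      unfolding V_def by (subst distr_distr) (auto simp: meas comp_def)
    also have "\<dots> = distr (PiM UNIV (\<lambda>_::'n. Q)) Q (\<lambda>F. F i)"
      by (rule distr_cong) (simp_all add: sQ)
    also have "\<dots> = Q"
      by (rule distr_PiM_component) (simp_all add: ps)
    finally show ?thesis .
  qed
  then show "\<And>i. distr V borel (\<lambda>v. v$i) = Q" .
  show "V.indep_vars (\<lambda>_. borel) (\<lambda>i v. v$i) UNIV"
  proof (subst V.indep_vars_iff_distr_eq_PiM)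
    show "distr V (PiM UNIV (\<lambda>_. borel)) (\<lambda>x. \<lambda>i\<in>UNIV. x $ i) = PiM UNIV (\<lambda>i. distr V borel (\<lambda>v. v $ i))"
    proof -
      have "distr V (PiM UNIV (\<lambda>_. borel)) (\<lambda>x. \<lambda>i\<in>UNIV. x $ i)
          = distr (PiM UNIV (\<lambda>_::'n. Q)) (PiM UNIV (\<lambda>_. borel)) (\<lambda>F. \<lambda>i\<in>UNIV. (vec_lambda F :: 'a^'n) $ i)"
        unfolding V_def by (subst distr_distr) (auto simp: meas comp_def)
      also have "\<dots> = distr (PiM UNIV (\<lambda>_::'n. Q)) (PiM UNIV (\<lambda>_::'n. Q)) (\<lambda>F. F)"
        by (rule distr_cong) (auto simp: sQ intro!: sets_PiM_cong)
      also have "\<dots> = PiM UNIV (\<lambda>_::'n. Q)"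
        by (rule distr_id)
      also have "\<dots> = PiM UNIV (\<lambda>i. distr V borel (\<lambda>v. v $ i))"
        by (simp add: comp)
      finally show ?thesis .
    qed
  qed (auto intro!: meas_from_borel simp: V_def)
qed


definition N1 :: "real measure" where
  "N1 = density lborel (\<lambda>x. ennreal (std_normal_density x))"

definition gd :: "real^'d::finite \<Rightarrow> real" where
  "gd v = (\<Prod>j\<in>UNIV. std_normal_density (v$j))"

definition Gd :: "(real^'d::finite) measure" where
  "Gd = density lborel (\<lambda>v. ennreal (gd v))"

lemma gd_measurable[measurable]: "gd \<in> borel_measurable borel"
  unfolding gd_def by measurable

lemma gd_nonneg: "0 \<le> gd v"
  unfolding gd_def by (intro prod_nonneg) auto

lemma N1_prob: "prob_space N1"
  unfolding N1_def by (rule prob_space_normal_density) simp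

lemma Gd_eq: "(Gd :: (real^'d::finite) measure) = distr (PiM UNIV (\<lambda>_::'d. N1)) borel vec_lambda"
  unfolding Gd_def gd_def N1_def
  by (rule density_vec_prod) (auto intro: prob_space_normal_density)

lemma Gd_facts:
  shows "prob_space (Gd :: (real^'d::finite) measure)"
    and "\<And>j. distr (Gd :: (real^'d::finite) measure) borel (\<lambda>v. v$j) = N1"
    and "prob_space.indep_vars (Gd :: (real^'d::finite) measure) (\<lambda>_. borel) (\<lambda>i v. v$i) UNIV"
  unfolding Gd_eq
  using vec_distr_facts[OF N1_prob, where 'n='d] by (auto simp: N1_def)

lemma gauss_eq: "(gauss_init :: (real^'d::finite^'m::finite) measure) = distr (PiM UNIV (\<lambda>_::'m. Gd)) borel vec_lambda"
proof -
  have "gauss_init = density lborel (\<lambda>w::real^'d^'m. ennreal (\<Prod>s\<in>UNIV. gd (w$s)))"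
    unfolding gauss_init_def gd_def by simp
  also have "\<dots> = distr (PiM UNIV (\<lambda>_::'m. density lborel (\<lambda>x. ennreal (gd x)))) borel vec_lambda"
    by (rule density_vec_prod) (auto simp: gd_nonneg Gd_def[symmetric] Gd_facts)
  finally show ?thesis by (simp add: Gd_def)
qed

lemma gauss_facts:
  shows "prob_space (gauss_init :: (real^'d::finite^'m::finite) measure)"
    and "\<And>s. distr (gauss_init :: (real^'d::finite^'m::finite) measure) borel (\<lambda>w. w$s) = Gd"
    and "prob_space.indep_vars (gauss_init :: (real^'d::finite^'m::finite) measure) (\<lambda>_. borel) (\<lambda>s w. w$s) UNIV"
  unfolding gauss_eq
  using vec_distr_facts[OF Gd_facts(1), where 'n='m] by (auto simp: Gd_def)


lemma Gd_inner_distributed: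
  fixes x :: "real^'d::finite" assumes x: "x \<noteq> 0"
  shows "distributed (Gd :: (real^'d) measure) lborel (\<lambda>v. x \<bullet> v) (\<lambda>t. ennreal (normal_density 0 (norm x) t))"
proof -
  interpret G: prob_space "Gd :: (real^'d) measure" by (rule Gd_facts(1))
  have sG: "sets (Gd :: (real^'d) measure) = sets borel" by (simp add: Gd_def)
  have dj: "distributed (Gd :: (real^'d) measure) lborel (\<lambda>v. v$j) (\<lambda>t. ennreal (std_normal_density t))" for j
  proof -
    have "distr (Gd :: (real^'d) measure) lborel (\<lambda>v. v$j) = distr (Gd :: (real^'d) measure) borel (\<lambda>v. v$j)"
      by (rule distr_cong) simp_all
    also have "\<dots> = N1" by (rule Gd_facts(2))
    finally show ?thesis
      unfolding distributed_def N1_def using sG by (auto intro!: meas_from_borel)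
  qed
  define J where "J = {j. x$j \<noteq> 0}"
  have J: "J \<noteq> {}" using x unfolding J_def by (auto simp: vec_eq_iff)
  have dJ: "distributed (Gd :: (real^'d) measure) lborel (\<lambda>v. x$j * v$j) (\<lambda>t. ennreal (normal_density 0 \<bar>x$j\<bar> t))"
    if "j \<in> J" for j
    using G.normal_density_affine[OF dj[of j], where \<alpha>="x$j" and \<beta>=0] that by (simp add: J_def)
  have ind: "G.indep_vars (\<lambda>_. borel) (\<lambda>j v. x$j * v$j) J"
  proof -
    have "G.indep_vars (\<lambda>_. borel) (\<lambda>j v. (\<lambda>t. x$j * t) (v$j)) UNIV"
      by (rule G.indep_vars_compose2[OF Gd_facts(3)]) simp
    then show ?thesis by (rule G.indep_vars_subset) simp
  qed
  have "distributed (Gd :: (real^'d) measure) lborel (\<lambda>v. \<Sum>j\<in>J. x$j * v$j)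
      (\<lambda>t. ennreal (normal_density (\<Sum>j\<in>J. 0) (sqrt (\<Sum>j\<in>J. \<bar>x$j\<bar>\<^sup>2)) t))"
    by (rule G.sum_indep_normal[OF _ J ind]) (auto simp: J_def dJ)
  moreover have "(\<lambda>v. \<Sum>j\<in>J. x$j * v$j) = (\<lambda>v. x \<bullet> v)"
  proof
    fix v :: "real^'d"
    have "(\<Sum>j\<in>J. x$j * v$j) = (\<Sum>j\<in>UNIV. x$j * v$j)"
      by (rule sum.mono_neutral_left) (auto simp: J_def)
    then show "(\<Sum>j\<in>J. x$j * v$j) = x \<bullet> v" by (simp add: inner_vec_def)
  qed
  moreover have "sqrt (\<Sum>j\<in>J. \<bar>x$j\<bar>\<^sup>2) = norm x"
  proof -
    have "(\<Sum>j\<in>J. \<bar>x$j\<bar>\<^sup>2) = (\<Sum>j\<in>UNIV. \<bar>x$j\<bar>\<^sup>2)"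
      by (rule sum.mono_neutral_left) (auto simp: J_def)
    then show ?thesis by (simp add: norm_vec_def L2_set_def)
  qed
  ultimately show ?thesis by simp
qed

lemma Gd_inner_prob:
  fixes x :: "real^'d::finite" assumes x: "x \<noteq> 0" and c: "0 \<le> c"
  shows "measure (Gd :: (real^'d) measure) {v. \<bar>x \<bullet> v\<bar> \<le> c} \<le> 2 * c / (norm x * sqrt (2 * pi))"
proof -
  interpret G: prob_space "Gd :: (real^'d) measure" by (rule Gd_facts(1))
  define \<sigma> where "\<sigma> = norm x"
  have \<sigma>: "\<sigma> > 0" using x by (simp add: \<sigma>_def)
  have sp: "space (Gd :: (real^'d) measure) = UNIV" by (simp add: Gd_def)
  have set: "{v. \<bar>x \<bullet> v\<bar> \<le> c} = (\<lambda>v. x \<bullet> v) -` {-c..c} \<inter> space (Gd :: (real^'d) measure)"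
    by (auto simp: sp)
  have bound: "normal_density 0 \<sigma> t \<le> 1 / (\<sigma> * sqrt (2 * pi))" for t
  proof -
    have "normal_density 0 \<sigma> t = 1 / sqrt (2 * pi * \<sigma>\<^sup>2) * exp (-(t - 0)\<^sup>2 / (2 * \<sigma>\<^sup>2))"
      by (simp add: normal_density_def)
    also have "\<dots> \<le> 1 / sqrt (2 * pi * \<sigma>\<^sup>2) * 1"
      by (intro mult_left_mono) (auto simp: \<sigma>)
    also have "sqrt (2 * pi * \<sigma>\<^sup>2) = \<sigma> * sqrt (2 * pi)"
      using \<sigma> by (simp add: real_sqrt_mult mult.commute)
    finally show ?thesis by simp
  qed
  have "emeasure (Gd :: (real^'d) measure) {v. \<bar>x \<bullet> v\<bar> \<le> c}
      = (\<integral>\<^sup>+t. ennreal (normal_density 0 \<sigma> t) * indicator {-c..c} t \<partial>lborel)"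
    unfolding set \<sigma>_def by (rule distributed_emeasure[OF Gd_inner_distributed[OF x]]) simp
  also have "\<dots> \<le> (\<integral>\<^sup>+t. ennreal (1 / (\<sigma> * sqrt (2 * pi))) * indicator {-c..c} t \<partial>lborel)"
    by (intro nn_integral_mono mult_right_mono) (auto intro: ennreal_leI bound)
  also have "\<dots> = ennreal (1 / (\<sigma> * sqrt (2 * pi))) * emeasure lborel {-c..c}"
    by (simp add: nn_integral_cmult_indicator)
  also have "\<dots> = ennreal (2 * c / (\<sigma> * sqrt (2 * pi)))"
    using c \<sigma> by (simp add: ennreal_mult'[symmetric])
  finally show ?thesis
    using c \<sigma> by (simp add: G.emeasure_eq_measure \<sigma>_def)
qed

lemma meas_ind_inner:
  fixes x :: "real^'d::finite"
  shows "(\<lambda>v::real^'d. if \<bar>x \<bullet> v\<bar> \<le> c then 1 else (0::real)) \<in> borel_measurable borel"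
proof -
  have m1[measurable]: "(\<lambda>v::real^'d. x \<bullet> v) \<in> borel_measurable borel"
    by (intro borel_measurable_continuous_onI continuous_intros)
  show ?thesis by measurable
qed

lemma gauss_block_prob:
  fixes x :: "real^'d::finite" assumes x: "x \<noteq> 0" and c: "0 \<le> c"
  shows "measure (gauss_init :: (real^'d^'m::finite) measure) {w\<in>space gauss_init. \<bar>x \<bullet> w$s\<bar> \<le> c}
     \<le> 2 * c / (norm x * sqrt (2 * pi))"
proof -
  have sp: "space (gauss_init :: (real^'d^'m::finite) measure) = UNIV" by (simp add: gauss_init_def)
  have "{w\<in>space gauss_init. \<bar>x \<bullet> w$s\<bar> \<le> c} = (\<lambda>w. w$s) -` {v. \<bar>x \<bullet> v\<bar> \<le> c} \<inter> space (gauss_init :: (real^'d^'m::finite) measure)"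
    by (auto simp: sp)
  also have "measure gauss_init \<dots> = measure (distr (gauss_init :: (real^'d^'m::finite) measure) borel (\<lambda>w. w$s)) {v. \<bar>x \<bullet> v\<bar> \<le> c}"
    by (rule measure_distr[symmetric]) (auto simp: gauss_init_def)
  also have "\<dots> = measure (Gd :: (real^'d) measure) {v. \<bar>x \<bullet> v\<bar> \<le> c}"
    by (simp add: gauss_facts(2))
  also have "\<dots> \<le> 2 * c / (norm x * sqrt (2 * pi))"
    by (rule Gd_inner_prob[OF x c])
  finally show ?thesis .
qed

lemma gauss_count_bound:
  fixes x :: "real^'d::finite" assumes x: "x \<noteq> 0" and \<tau>: "0 \<le> \<tau>" and \<epsilon>: "0 \<le> \<epsilon>"
  shows "measure (gauss_init :: (real^'d^'m::finite) measure)
     {w\<in>space gauss_init. real CARD('m) * \<tau> + \<epsilon> \<le> (\<Sum>s\<in>UNIV. if \<bar>x \<bullet> w$s\<bar> \<le> \<tau> * norm x then 1 else 0)}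
     \<le> exp (- 2 * \<epsilon>\<^sup>2 / real CARD('m))"
proof -
  interpret P: prob_space "gauss_init :: (real^'d^'m::finite) measure" by (rule gauss_facts(1))
  define X :: "'m \<Rightarrow> real^'d^'m \<Rightarrow> real" where
    "X = (\<lambda>s w. if \<bar>x \<bullet> w$s\<bar> \<le> \<tau> * norm x then 1 else 0)"
  have ind: "P.indep_vars (\<lambda>_. borel) X UNIV"
  proof -
    have "P.indep_vars (\<lambda>_. borel) (\<lambda>s w. (\<lambda>v. if \<bar>x \<bullet> v\<bar> \<le> \<tau> * norm x then 1 else (0::real)) (w$s)) UNIV"
      by (rule P.indep_vars_compose2[OF gauss_facts(3)]) (simp add: meas_ind_inner)
    then show ?thesis by (simp add: X_def)
  qed
  interpret H: Hoeffding_ineq "gauss_init :: (real^'d^'m::finite) measure" UNIV X "\<lambda>_. 0" "\<lambda>_. 1"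
    "\<Sum>s\<in>UNIV. P.expectation (X s)"
  proof unfold_locales
    show "P.indep_vars (\<lambda>_. borel) X UNIV" by (rule ind)
  qed (simp_all add: X_def)
  have sp: "space (gauss_init :: (real^'d^'m::finite) measure) = UNIV" by (simp add: gauss_init_def)
  have sg: "sets (gauss_init :: (real^'d^'m::finite) measure) = sets borel" by (simp add: gauss_init_def)
  have mX[measurable]: "X s \<in> borel_measurable gauss_init" for s :: 'm
    using H.random_variable by simp
  have setX: "{w\<in>space gauss_init. \<bar>x \<bullet> w$s\<bar> \<le> \<tau> * norm x} \<in> sets gauss_init" for s :: 'm
  proof -
    have "(\<lambda>w::real^'d^'m. x \<bullet> w$s) \<in> borel_measurable borel"
      by (intro borel_measurable_continuous_onI continuous_intros)
    then have "(\<lambda>w::real^'d^'m. x \<bullet> w$s) \<in> borel_measurable gauss_init"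
      by (rule meas_from_borel[OF sg])
    then show ?thesis by measurable
  qed
  have E: "P.expectation (X s) \<le> \<tau>" for s
  proof -
    have "X s = indicator {w\<in>space gauss_init. \<bar>x \<bullet> w$s\<bar> \<le> \<tau> * norm x}"
      by (simp add: X_def indicator_def fun_eq_iff sp)
    then have "P.expectation (X s) = measure gauss_init {w\<in>space gauss_init. \<bar>x \<bullet> w$s\<bar> \<le> \<tau> * norm x}"
      using setX[of s] by (simp add: P.emeasure_eq_measure)
    also have "\<dots> \<le> 2 * (\<tau> * norm x) / (norm x * sqrt (2 * pi))"
      by (rule gauss_block_prob[OF x]) (use \<tau> in simp)
    also have "\<dots> = \<tau> * (2 / sqrt (2 * pi))"
      using x by (simp add: field_simps)
    also have "\<dots> \<le> \<tau> * 1"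
    proof (intro mult_left_mono \<tau>)
      have "2 \<le> sqrt (2 * pi)"
        using pi_gt3 by (intro real_le_rsqrt) simp
      then show "2 / sqrt (2 * pi) \<le> 1" by simp
    qed
    finally show ?thesis by simp
  qed
  have mu: "(\<Sum>s\<in>UNIV. P.expectation (X s)) \<le> real CARD('m) * \<tau>"
    using sum_mono[of UNIV "\<lambda>s. P.expectation (X s)" "\<lambda>_. \<tau>", OF E] by simp
  have "measure gauss_init {w\<in>space gauss_init. real CARD('m) * \<tau> + \<epsilon> \<le> (\<Sum>s\<in>UNIV. X s w)}
      \<le> measure gauss_init {w\<in>space gauss_init. (\<Sum>s\<in>UNIV. X s w) \<ge> (\<Sum>s\<in>UNIV. P.expectation (X s)) + \<epsilon>}"
  proof (rule P.finite_measure_mono)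
    show "{w\<in>space gauss_init. (\<Sum>s\<in>UNIV. P.expectation (X s)) + \<epsilon> \<le> (\<Sum>s\<in>UNIV. X s w)} \<in> sets gauss_init"
      by measurable
  qed (use mu in auto)
  also have "\<dots> \<le> exp (- 2 * \<epsilon>\<^sup>2 / (\<Sum>s\<in>(UNIV::'m set). (1 - 0)\<^sup>2))"
    using H.Hoeffding_ineq_ge[OF \<epsilon>] by simp
  finally show ?thesis by (simp add: X_def)
qed


lemma norm_vec_sq: "(norm (x :: 'a::real_normed_vector^'n::finite))\<^sup>2 = (\<Sum>i\<in>UNIV. (norm (x$i))\<^sup>2)"
  unfolding norm_vec_def L2_set_def by (simp add: sum_nonneg)

lemma relu'_flip:
  assumes "relu' p \<noteq> relu' q"
  shows "\<bar>q\<bar> \<le> \<bar>p - q\<bar>"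
  using assms by (auto simp: relu'_def split: if_splits)

lemma relu_err:
  "\<bar>relu p - relu q - relu' q * (p - q)\<bar> \<le> (if relu' p \<noteq> relu' q then \<bar>p - q\<bar> else 0)"
  by (auto simp: relu_def relu'_def)

lemma inner_le_blk:
  fixes x y :: "real^'d::finite"
  assumes "norm x \<le> 1"
  shows "\<bar>x \<bullet> y\<bar> \<le> norm y"
proof -
  have "\<bar>x \<bullet> y\<bar> \<le> norm x * norm y" by (rule Cauchy_Schwarz_ineq2)
  also have "\<dots> \<le> 1 * norm y" using assms by (intro mult_right_mono) auto
  finally show ?thesis by simp
qed

lemma card_big_blocks:
  fixes w w0 :: "real^'d::finite^'m::finite"
  assumes \<tau>: "\<tau> > 0" and R: "dist w w0 \<le> R"
  shows "real (card {s. \<tau> < norm (w$s - w0$s)}) \<le> R\<^sup>2 / \<tau>\<^sup>2"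
proof -
  let ?B = "{s. \<tau> < norm (w$s - w0$s)}"
  have "real (card ?B) * \<tau>\<^sup>2 = (\<Sum>s\<in>?B. \<tau>\<^sup>2)" by simp
  also have "\<dots> \<le> (\<Sum>s\<in>?B. (norm ((w - w0)$s))\<^sup>2)"
    using \<tau> by (intro sum_mono power_mono) auto
  also have "\<dots> \<le> (\<Sum>s\<in>UNIV. (norm ((w - w0)$s))\<^sup>2)"
    by (intro sum_mono2) auto
  also have "\<dots> = (norm (w - w0))\<^sup>2" by (rule norm_vec_sq[symmetric])
  also have "\<dots> \<le> R\<^sup>2"
    using R by (intro power_mono) (auto simp: dist_norm)
  finally show ?thesis using \<tau> by (simp add: field_simps)
qed

lemma flip_subset:
  fixes w w0 v :: "real^'d::finite^'m::finite" and x :: "real^'d"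
  assumes x: "x \<noteq> 0"
  shows "{s. relu' (x \<bullet> w$s) \<noteq> relu' (x \<bullet> v$s)}
    \<subseteq> {s. \<bar>x \<bullet> w0$s\<bar> \<le> \<tau> * norm x} \<union> {s. \<tau> < norm (w$s - w0$s)} \<union> {s. \<tau> < norm (v$s - w0$s)}"
proof
  fix s assume s: "s \<in> {s. relu' (x \<bullet> w$s) \<noteq> relu' (x \<bullet> v$s)}"
  have key: "\<tau> < norm (u$s - w0$s)" if "relu' (x \<bullet> u$s) \<noteq> relu' (x \<bullet> w0$s)" "\<not> \<bar>x \<bullet> w0$s\<bar> \<le> \<tau> * norm x"
    for u :: "real^'d^'m"
  proof -
    have "\<tau> * norm x < \<bar>x \<bullet> w0$s\<bar>" using that(2) by simp
    also have "\<dots> \<le> \<bar>x \<bullet> u$s - x \<bullet> w0$s\<bar>" by (rule relu'_flip[OF that(1)])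
    also have "\<dots> = \<bar>x \<bullet> (u$s - w0$s)\<bar>" by (simp add: inner_diff_right)
    also have "\<dots> \<le> norm x * norm (u$s - w0$s)" by (rule Cauchy_Schwarz_ineq2)
    finally have "norm x * \<tau> < norm x * norm (u$s - w0$s)" by (simp add: mult.commute)
    then show ?thesis using x by simp
  qed
  show "s \<in> {s. \<bar>x \<bullet> w0$s\<bar> \<le> \<tau> * norm x} \<union> {s. \<tau> < norm (w$s - w0$s)} \<union> {s. \<tau> < norm (v$s - w0$s)}"
  proof (cases "\<bar>x \<bullet> w0$s\<bar> \<le> \<tau> * norm x")
    case False
    from s have "relu' (x \<bullet> w$s) \<noteq> relu' (x \<bullet> w0$s) \<or> relu' (x \<bullet> v$s) \<noteq> relu' (x \<bullet> w0$s)" by auto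
    then show ?thesis using key[OF _ False, of w] key[OF _ False, of v] by auto
  qed simp
qed

lemma card_flip:
  fixes w w0 v :: "real^'d::finite^'m::finite" and x :: "real^'d"
  assumes x: "x \<noteq> 0" and \<tau>: "\<tau> > 0" and w: "dist w w0 \<le> R" and v: "dist v w0 \<le> R"
  shows "real (card {s. relu' (x \<bullet> w$s) \<noteq> relu' (x \<bullet> v$s)})
     \<le> (\<Sum>s\<in>UNIV. if \<bar>x \<bullet> w0$s\<bar> \<le> \<tau> * norm x then 1 else 0) + 2 * R\<^sup>2 / \<tau>\<^sup>2"
proof -
  let ?N = "{s. \<bar>x \<bullet> w0$s\<bar> \<le> \<tau> * norm x}"
  let ?Bw = "{s. \<tau> < norm (w$s - w0$s)}" and ?Bv = "{s. \<tau> < norm (v$s - w0$s)}"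
  have "card {s. relu' (x \<bullet> w$s) \<noteq> relu' (x \<bullet> v$s)} \<le> card (?N \<union> ?Bw \<union> ?Bv)"
    by (intro card_mono flip_subset[OF x]) simp
  also have "\<dots> \<le> card ?N + card ?Bw + card ?Bv"
    by (meson card_Un_le add_le_mono1 le_trans)
  finally have "real (card {s. relu' (x \<bullet> w$s) \<noteq> relu' (x \<bullet> v$s)}) \<le> real (card ?N) + real (card ?Bw) + real (card ?Bv)"
    by linarith
  also have "real (card ?N) = (\<Sum>s\<in>UNIV. if \<bar>x \<bullet> w0$s\<bar> \<le> \<tau> * norm x then 1 else 0)"
    by (simp add: sum.If_cases)
  finally show ?thesis
    using card_big_blocks[OF \<tau> w] card_big_blocks[OF \<tau> v] by simp
qed


lemma grad_bound:
  fixes x :: "real^'d::finite" and a :: "'m::finite \<Rightarrow> real" and w v :: "real^'d^'m"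
  assumes a: "\<forall>s. a s = 1 \<or> a s = -1" and x: "norm x \<le> 1"
    and K: "real (card {s. relu' (x \<bullet> w$s) \<noteq> relu' (x \<bullet> v$s)}) \<le> K"
  shows "norm (net_grad a x w - net_grad a x v) \<le> sqrt (K / real CARD('m))"
proof -
  let ?S = "{s. relu' (x \<bullet> w$s) \<noteq> relu' (x \<bullet> v$s)}"
  let ?m = "real CARD('m)"
  have m: "?m > 0" by simp
  have blk: "(norm ((net_grad a x w - net_grad a x v)$s))\<^sup>2 \<le> (if s \<in> ?S then 1 / ?m else 0)" for s
  proof -
    have eq: "(net_grad a x w - net_grad a x v)$s
       = ((a s / sqrt ?m) * (relu' (x \<bullet> w$s) - relu' (x \<bullet> v$s))) *\<^sub>R x"
      by (simp add: net_grad_def algebra_simps scaleR_diff_left)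
    have as: "\<bar>a s\<bar> = 1" using a by (metis abs_minus_cancel abs_one)
    have r: "\<bar>relu' (x \<bullet> w$s) - relu' (x \<bullet> v$s)\<bar> = (if s \<in> ?S then 1 else 0)"
      by (auto simp: relu'_def)
    have "(norm ((net_grad a x w - net_grad a x v)$s))\<^sup>2
        = (1 / sqrt ?m)\<^sup>2 * (if s \<in> ?S then 1 else 0) * (norm x)\<^sup>2"
      unfolding eq using as r by (simp add: power_mult_distrib abs_mult power_divide)
    also have "\<dots> \<le> (1 / sqrt ?m)\<^sup>2 * (if s \<in> ?S then 1 else 0) * 1"
      using x by (intro mult_left_mono) (auto simp: power_le_one)
    also have "\<dots> = (if s \<in> ?S then 1 / ?m else 0)"
      using m by (simp add: power_divide)
    finally show ?thesis .
  qed
  have "(norm (net_grad a x w - net_grad a x v))\<^sup>2 \<le> (\<Sum>s\<in>UNIV. if s \<in> ?S then 1 / ?m else 0)"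
    by (subst norm_vec_sq) (intro sum_mono blk)
  also have "\<dots> = real (card ?S) / ?m"
    by (simp add: sum.If_cases)
  also have "\<dots> \<le> K / ?m"
    using K m by (simp add: divide_right_mono)
  finally show ?thesis
    by (intro real_le_rsqrt)
qed

lemma lin_err_bound:
  fixes x :: "real^'d::finite" and a :: "'m::finite \<Rightarrow> real" and w v :: "real^'d^'m"
  assumes a: "\<forall>s. a s = 1 \<or> a s = -1" and x: "norm x \<le> 1"
    and K: "real (card {s. relu' (x \<bullet> w$s) \<noteq> relu' (x \<bullet> v$s)}) \<le> K"
  shows "\<bar>lin_err a x w v\<bar> \<le> sqrt (K / real CARD('m)) * norm (w - v)"
proof -
  let ?S = "{s. relu' (x \<bullet> w$s) \<noteq> relu' (x \<bullet> v$s)}"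
  let ?m = "real CARD('m)"
  have m: "?m > 0" by simp
  define e where "e s = relu (x \<bullet> w$s) - relu (x \<bullet> v$s) - relu' (x \<bullet> v$s) * (x \<bullet> w$s - x \<bullet> v$s)" for s
  have as: "\<bar>a s\<bar> = 1" for s using a by (metis abs_minus_cancel abs_one)
  have le: "lin_err a x w v = (\<Sum>s\<in>UNIV. (a s / sqrt ?m) * e s)"
  proof -
    have g: "net_grad a x v \<bullet> (w - v) = (\<Sum>s\<in>UNIV. (a s / sqrt ?m) * relu' (x \<bullet> v$s) * (x \<bullet> w$s - x \<bullet> v$s))"
    proof -
      have "net_grad a x v \<bullet> (w - v) = (\<Sum>s\<in>UNIV. (net_grad a x v)$s \<bullet> (w - v)$s)"
        by (rule inner_vec_def)
      also have "\<dots> = (\<Sum>s\<in>UNIV. (a s / sqrt ?m) * relu' (x \<bullet> v$s) * (x \<bullet> w$s - x \<bullet> v$s))"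
        by (intro sum.cong refl) (simp add: net_grad_def inner_diff_right diff_divide_distrib right_diff_distrib)
      finally show ?thesis .
    qed
    show ?thesis
      unfolding lin_err_def net_def g e_def
      apply (simp add: sum_distrib_left sum_subtractf[symmetric] algebra_simps)
      apply (intro sum.cong refl)
      apply (simp add: diff_divide_distrib add_divide_distrib)
      done
  qed
  have eb: "\<bar>e s\<bar> \<le> (if s \<in> ?S then norm ((w - v)$s) else 0)" for s
  proof -
    have "\<bar>e s\<bar> \<le> (if s \<in> ?S then \<bar>x \<bullet> w$s - x \<bullet> v$s\<bar> else 0)"
      unfolding e_def using relu_err by simp
    also have "\<bar>x \<bullet> w$s - x \<bullet> v$s\<bar> \<le> norm ((w - v)$s)"
      using inner_le_blk[OF x, of "(w - v)$s"] by (simp add: inner_diff_right)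
    finally show ?thesis by (auto split: if_splits)
  qed
  have "\<bar>lin_err a x w v\<bar> \<le> (\<Sum>s\<in>UNIV. \<bar>(a s / sqrt ?m) * e s\<bar>)"
    unfolding le by (rule sum_abs)
  also have "\<dots> = (\<Sum>s\<in>UNIV. (1 / sqrt ?m) * \<bar>e s\<bar>)"
    by (intro sum.cong refl) (simp add: abs_mult as)
  also have "\<dots> \<le> (\<Sum>s\<in>UNIV. (1 / sqrt ?m) * (if s \<in> ?S then norm ((w - v)$s) else 0))"
    by (intro sum_mono mult_left_mono eb) simp
  also have "\<dots> = (1 / sqrt ?m) * (\<Sum>s\<in>UNIV. (if s \<in> ?S then norm ((w - v)$s) else 0))"
    by (simp only: sum_distrib_left)
  also have "\<dots> = (1 / sqrt ?m) * (\<Sum>s\<in>?S. \<bar>1\<bar> * \<bar>norm ((w - v)$s)\<bar>)"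
  proof -
    have "(\<Sum>s\<in>UNIV. (if s \<in> ?S then norm ((w - v)$s) else 0)) = (\<Sum>s\<in>?S. \<bar>1\<bar> * \<bar>norm ((w - v)$s)\<bar>)"
      by (subst sum.If_cases) simp_all
    then show ?thesis by simp
  qed
  also have "\<dots> \<le> (1 / sqrt ?m) * (L2_set (\<lambda>_. 1) ?S * L2_set (\<lambda>s. norm ((w - v)$s)) ?S)"
    by (intro mult_left_mono L2_set_mult_ineq) simp
  also have "L2_set (\<lambda>_. 1) ?S = sqrt (real (card ?S))"
    by (simp add: L2_set_constant)
  also have "L2_set (\<lambda>s. norm ((w - v)$s)) ?S \<le> norm (w - v)"
  proof -
    have "L2_set (\<lambda>s. norm ((w - v)$s)) ?S \<le> L2_set (\<lambda>s. norm ((w - v)$s)) UNIV"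
      unfolding L2_set_def by (intro real_sqrt_le_mono sum_mono2) auto
    then show ?thesis by (simp add: norm_vec_def)
  qed
  then have "(1 / sqrt ?m) * (sqrt (real (card ?S)) * L2_set (\<lambda>s. norm ((w - v)$s)) ?S)
      \<le> (1 / sqrt ?m) * (sqrt (real (card ?S)) * norm (w - v))"
    by (intro mult_left_mono) auto
  also have "\<dots> = sqrt (real (card ?S) / ?m) * norm (w - v)"
    by (simp add: real_sqrt_divide)
  also have "\<dots> \<le> sqrt (K / ?m) * norm (w - v)"
    using K m by (intro mult_right_mono real_sqrt_le_mono divide_right_mono) auto
  finally show ?thesis .
qed


lemma bad_sets:
  fixes x :: "real^'d::finite"
  shows "{w\<in>space (gauss_init :: (real^'d^'m::finite) measure). c \<le> (\<Sum>s\<in>UNIV. if \<bar>x \<bullet> w$s\<bar> \<le> t then 1 else (0::real))}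
    \<in> sets gauss_init"
proof -
  have sg: "sets (gauss_init :: (real^'d^'m::finite) measure) = sets borel" by (simp add: gauss_init_def)
  have [measurable]: "(\<lambda>w::real^'d^'m. x \<bullet> w$s) \<in> borel_measurable gauss_init" for s
  proof -
    have "(\<lambda>w::real^'d^'m. x \<bullet> w$s) \<in> borel_measurable borel"
      by (intro borel_measurable_continuous_onI continuous_intros)
    then show ?thesis by (rule meas_from_borel[OF sg])
  qed
  show ?thesis by measurable
qed

lemma numeric:
  fixes r q l m R :: real
  assumes r: "r > 0" and q: "q \<ge> 1" and l: "l \<ge> 0" and m: "m = q^6" and R: "R = r^3"
  shows "sqrt ((m * (r^2/q^2) + q^3 * l^2 / sqrt 2 + 2 * R^2 / (r^2/q^2)^2) / m) \<le> (3*r + l) / q"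
proof -
  have q0: "q > 0" using q by simp
  have mpos: "m > 0" using q0 m by simp
  have e1: "m * (r^2/q^2) / m = r^2/q^2" using mpos by simp
  have e2: "2 * R^2 / (r^2/q^2)^2 / m = 2 * (r^2 / q^2)"
    using q0 r by (simp add: m R field_simps)
  have e3: "q^3 * l^2 / sqrt 2 / m \<le> l^2 / q^2"
  proof -
    have "q^3 * l^2 / sqrt 2 / m = l^2 / (sqrt 2 * q^3)"
      using q0 by (simp add: m field_simps)
    also have "\<dots> \<le> l^2 / q^2"
    proof (intro divide_left_mono)
      have "q^2 \<le> q^3" using q by (simp add: power_increasing)
      also have "\<dots> \<le> sqrt 2 * q^3" 
      proof -
        have "1 * q^3 \<le> sqrt 2 * q^3" using q0 by (intro mult_right_mono) auto
        then show ?thesis by simp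
      qed
      finally show "q^2 \<le> sqrt 2 * q^3" .
    qed (use q0 in auto)
    finally show ?thesis .
  qed
  have "(m * (r^2/q^2) + q^3 * l^2 / sqrt 2 + 2 * R^2 / (r^2/q^2)^2) / m
      = m * (r^2/q^2) / m + q^3 * l^2 / sqrt 2 / m + 2 * R^2 / (r^2/q^2)^2 / m"
    by (simp add: add_divide_distrib)
  also have "\<dots> \<le> r^2/q^2 + l^2/q^2 + 2 * (r^2/q^2)"
    by (rule add_mono[OF add_mono[OF eq_refl[OF e1] e3] eq_refl[OF e2]])
  also have "\<dots> = (3*r^2 + l^2) / q^2"
    by (simp add: add_divide_distrib)
  also have "\<dots> \<le> (3*r + l)^2 / q^2"
  proof (rule divide_right_mono)
    have "0 \<le> r * l" "0 \<le> r * r" using r l by auto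
    then show "3*r^2 + l^2 \<le> (3*r + l)^2"
      by (simp add: power2_eq_square algebra_simps)
  qed simp
  also have "\<dots> = ((3*r + l) / q)^2" by (simp add: power_divide)
  finally have X: "(m * (r^2/q^2) + q^3 * l^2 / sqrt 2 + 2 * R^2 / (r^2/q^2)^2) / m \<le> ((3*r + l) / q)^2" .
  show ?thesis
    by (rule real_le_lsqrt[OF _ X]) (use r l q0 in simp)
qed


theorem mainTheorem20:
  fixes x :: "nat \<Rightarrow> real^'d" and n :: nat
    and a :: "'m::finite \<Rightarrow> real" and R \<delta> :: real
  assumes x_norm: "\<forall>i<n. norm (x i) \<le> 1"
    and a_sign: "\<forall>s. a s = 1 \<or> a s = -1"
    and R_pos: "R > 0"
    and delta: "0 < \<delta>" "\<delta> < 1"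
  shows "\<exists>A \<in> sets (gauss_init :: (real^'d^'m) measure).
     measure gauss_init A \<ge> 1 - \<delta> \<and>
     (\<forall>w0\<in>A. \<forall>w v. dist w w0 \<le> R \<longrightarrow> dist v w0 \<le> R \<longrightarrow>
        (\<forall>i<n.
          \<bar>lin_err a (x i) w v\<bar>
            \<le> (3 * R powr (1/3) + ln (real n / \<delta>) powr (1/4)) / real CARD('m) powr (1/6)
               * norm (w - v)
        \<and> norm (net_grad a (x i) w - net_grad a (x i) v)
            \<le> (3 * R powr (1/3) + ln (real n / \<delta>) powr (1/4)) / real CARD('m) powr (1/6)))"
proof -
  interpret P: prob_space "gauss_init :: (real^'d^'m) measure" by (rule gauss_facts(1))
  define B where "B = (3 * R powr (1/3) + ln (real n / \<delta>) powr (1/4)) / real CARD('m) powr (1/6)"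
  have B0: "0 \<le> B" unfolding B_def by (intro divide_nonneg_nonneg add_nonneg_nonneg) auto
  have zero_case: "\<bar>lin_err a (x i) w v\<bar> \<le> B * norm (w - v) \<and> norm (net_grad a (x i) w - net_grad a (x i) v) \<le> B"
    if "x i = 0" "i < n" for i and w v :: "real^'d^'m"
  proof -
    have K: "real (card {s. relu' (x i \<bullet> w$s) \<noteq> relu' (x i \<bullet> v$s)}) \<le> 0"
      using that by simp
    have "\<bar>lin_err a (x i) w v\<bar> \<le> sqrt (0 / real CARD('m)) * norm (w - v)"
      by (rule lin_err_bound[OF a_sign _ K]) (use x_norm that in auto)
    moreover have "norm (net_grad a (x i) w - net_grad a (x i) v) \<le> sqrt (0 / real CARD('m))"
      by (rule grad_bound[OF a_sign _ K]) (use x_norm that in auto)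
    ultimately show ?thesis using B0 by (auto intro: order_trans)
  qed
  show ?thesis
  proof (cases "n = 0")
    case True
    show ?thesis
      using delta by (intro bexI[of _ "space gauss_init"]) (auto simp: True P.prob_space)
  next
    case False
    define m where "m = real CARD('m)"
    define L where "L = ln (real n / \<delta>)"
    have m1: "m \<ge> 1" unfolding m_def by simp
    have "real n / \<delta> > 1" using False delta by (simp add: field_simps)
    then have L: "L > 0" unfolding L_def by simp
    define r where "r = R powr (1/3)"
    define q where "q = m powr (1/6)"
    define l where "l = L powr (1/4)"
    have r: "r > 0" using R_pos by (simp add: r_def)
    have q: "q \<ge> 1" unfolding q_def using m1 by (intro ge_one_powr_ge_zero) auto
    have l: "l \<ge> 0" by (simp add: l_def)
    have "q^6 = m powr (of_nat 6 * (1/6))" unfolding q_def by (rule powr_power) (use m1 in simp)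
    then have mq: "m = q^6" using m1 by simp
    have "r^3 = R powr (of_nat 3 * (1/3))" unfolding r_def by (rule powr_power) (use R_pos in simp)
    then have Rr: "R = r^3" using R_pos by simp
    have "l^4 = L powr (of_nat 4 * (1/4))" unfolding l_def by (rule powr_power) (use L in simp)
    then have Ll: "L = l^4" using L by simp
    have Bq: "B = (3*r + l) / q" by (simp add: B_def r_def l_def q_def m_def L_def)
    define \<tau> where "\<tau> = r^2/q^2"
    define \<epsilon> where "\<epsilon> = q^3 * l^2 / sqrt 2"
    have \<tau>: "\<tau> > 0" using r q by (simp add: \<tau>_def)
    have \<epsilon>: "\<epsilon> \<ge> 0" using q l by (simp add: \<epsilon>_def)
    define bad where "bad i = {w\<in>space (gauss_init :: (real^'d^'m) measure).
        m * \<tau> + \<epsilon> \<le> (\<Sum>s\<in>UNIV. if \<bar>x i \<bullet> w$s\<bar> \<le> \<tau> * norm (x i) then 1 else (0::real))}" for i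
    define I where "I = {i. i < n \<and> x i \<noteq> 0}"
    have finI: "finite I" and cardI: "card I \<le> n"
      unfolding I_def using card_mono[of "{..<n}" "{i. i < n \<and> x i \<noteq> 0}"] by auto
    have bad_sets': "bad i \<in> sets gauss_init" for i
      unfolding bad_def by (rule bad_sets)
    have exp_eq: "exp (- 2 * \<epsilon>\<^sup>2 / m) = \<delta> / real n"
    proof -
      have "2 * \<epsilon>\<^sup>2 / m = L"
        using q by (simp add: \<epsilon>_def mq Ll power_mult_distrib power_divide field_simps)
      then have "exp (- 2 * \<epsilon>\<^sup>2 / m) = exp (- L)" by simp
      also have "\<dots> = \<delta> / real n"
        using False delta by (simp add: L_def exp_minus exp_diff)
      finally show ?thesis .
    qed
    have bad_prob: "measure gauss_init (bad i) \<le> \<delta> / real n" if "i \<in> I" for i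
    proof -
      have "x i \<noteq> 0" using that by (simp add: I_def)
      from gauss_count_bound[OF this less_imp_le[OF \<tau>] \<epsilon>, where 'm='m]
      have "measure gauss_init {w\<in>space (gauss_init :: (real^'d^'m) measure). real CARD('m) * \<tau> + \<epsilon> \<le> (\<Sum>s\<in>UNIV. if \<bar>x i \<bullet> w$s\<bar> \<le> \<tau> * norm (x i) then 1 else 0)}
     \<le> exp (- 2 * \<epsilon>\<^sup>2 / real CARD('m))" .
      moreover
      have "exp (- (2 * \<epsilon>\<^sup>2 / real CARD('m))) = \<delta> / real n"
        using exp_eq by (simp add: m_def)
      ultimately show ?thesis by (simp add: bad_def m_def)
    qed
    define A where "A = space gauss_init - (\<Union>i\<in>I. bad i)"
    have Usets: "(\<Union>i\<in>I. bad i) \<in> sets gauss_init"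
      using finI bad_sets' by auto
    have "measure gauss_init (\<Union>i\<in>I. bad i) \<le> (\<Sum>i\<in>I. measure gauss_init (bad i))"
      by (rule P.finite_measure_subadditive_finite[OF finI]) (use bad_sets' in auto)
    also have "\<dots> \<le> (\<Sum>i\<in>I. \<delta> / real n)"
      by (intro sum_mono bad_prob)
    also have "\<dots> = real (card I) * (\<delta> / real n)" by simp
    also have "\<dots> \<le> real n * (\<delta> / real n)"
      using cardI delta by (intro mult_right_mono) auto
    also have "\<dots> = \<delta>" using False by simp
    finally have Ub: "measure gauss_init (\<Union>i\<in>I. bad i) \<le> \<delta>" .
    have Aprob: "measure gauss_init A \<ge> 1 - \<delta>"
      unfolding A_def using P.prob_compl[OF Usets] Ub by simp
    have Asets: "A \<in> sets gauss_init" unfolding A_def using Usets by auto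
    show ?thesis
      unfolding B_def[symmetric]
    proof (intro bexI[OF _ Asets] conjI[OF Aprob] ballI allI impI)
      fix w0 w v :: "real^'d^'m" and i
      assume w0: "w0 \<in> A" and w: "dist w w0 \<le> R" and v: "dist v w0 \<le> R" and i: "i < n"
      show "\<bar>lin_err a (x i) w v\<bar> \<le> B * norm (w - v) \<and> norm (net_grad a (x i) w - net_grad a (x i) v) \<le> B"
      proof (cases "x i = 0")
        case True
        then show ?thesis using zero_case i by blast
      next
        case False
        then have iI: "i \<in> I" using i by (simp add: I_def)
        then have nb: "w0 \<notin> bad i" using w0 by (auto simp: A_def)
        have sp: "w0 \<in> space gauss_init" using w0 by (simp add: A_def)
        have cnt: "(\<Sum>s\<in>UNIV. if \<bar>x i \<bullet> w0$s\<bar> \<le> \<tau> * norm (x i) then 1 else (0::real)) < m * \<tau> + \<epsilon>"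
          using nb sp by (auto simp: bad_def)
        define K where "K = m * \<tau> + \<epsilon> + 2 * R\<^sup>2 / \<tau>\<^sup>2"
        have K: "real (card {s. relu' (x i \<bullet> w$s) \<noteq> relu' (x i \<bullet> v$s)}) \<le> K"
          using card_flip[OF False \<tau> w v] cnt unfolding K_def by linarith
        have KB: "sqrt (K / real CARD('m)) \<le> B"
          using numeric[OF r q l mq Rr] unfolding K_def Bq \<tau>_def \<epsilon>_def m_def by simp
        have "\<bar>lin_err a (x i) w v\<bar> \<le> sqrt (K / real CARD('m)) * norm (w - v)"
          by (rule lin_err_bound[OF a_sign _ K]) (use x_norm i in auto)
        also have "\<dots> \<le> B * norm (w - v)"
          using KB by (intro mult_right_mono) auto
        finally have 1: "\<bar>lin_err a (x i) w v\<bar> \<le> B * norm (w - v)" .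
        have "norm (net_grad a (x i) w - net_grad a (x i) v) \<le> sqrt (K / real CARD('m))"
          by (rule grad_bound[OF a_sign _ K]) (use x_norm i in auto)
        with KB have 2: "norm (net_grad a (x i) w - net_grad a (x i) v) \<le> B" by linarith
        from 1 2 show ?thesis ..
      qed
    qed
  qed
qed

end
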